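(* Let $\mathcal D$ be a distribution of $(p,y)\in[0,1]\times\{0,1\}$ and $m^*=m^*(\mathcal D)$. If $m^*=+\infty$, then $\mathsf{SCDL}(\mathcal D)=0$. If $m^*<+\infty$, then (1) $\mathsf{SCDL}(\mathcal D)=\max\{\mathsf{SCDL}_{m^*}(\mathcal D),1/m^*\}\in[1/m^*,2/m^* )$, and (2) $\mathsf{SCDL}_{2m^*}(\mathcal D)\ge\mathsf{SCDL}(\mathcal D)$.
   Context: For $x\in\mathbb R$ write $x_+=\max\{x,0\}$. For a distribution $\mathcal D$ of $(p,y)\in[0,1]\times\{0,1\}$, a positive integer $m$ and $i\in\{0,\ldots,m\}$, let $w_i(p)=(1-|mp-i|)_+$, $\pi_i=\mathbb E_{\mathcal D}[w_i(p)]$ and $q_i=\mathbb E_{\mathcal D}[w_i(p)y]/\pi_i$ (terms with $\pi_i=0$ are $0$). Define $$\mathsf{SCDL}_m(\mathcal D)=\max_{i=0,\ldots,m}\Big(\sum_{j=0}^{i}\pi_j\big(q_j-\tfrac{i+1}{m}\big)_+ +\sum_{j=i+1}^{m}\pi_j\big(\tfrac im-q_j\big)_+\Big),\quad \mathsf{SCDL}(\mathcal D)=\inf_{m\in\{2^1,2^2,\ldots\}}\max\{\mathsf{SCDL}_m(\mathcal D),1/m\}.$$ $m^*(\mathcal D)$ is the smallest $m\in\{2^1,2^2,\ldots\}$ such that $\mathsf{SCDL}_{2m}(\mathcal D)\ge1/m$, and $m^*(\mathcal D)=+\infty$ if no such $m$ exists. *)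

theory Defs
  imports "HOL-Analysis.Analysis" "HOL-Probability.Probability" "HOL-Library.Extended_Nat"
begin

text \<open>A distribution D of (p,y) in [0,1] x {0,1} is a probability measure on real x bool
  (y = True encodes label 1) concentrated on [0,1] for the first coordinate.\<close>

definition is_pred_dist :: "(real \<times> bool) measure \<Rightarrow> bool" where
  "is_pred_dist M \<longleftrightarrow> prob_space M \<and>
     sets M = sets (borel \<Otimes>\<^sub>M count_space (UNIV :: bool set)) \<and>
     (AE x in M. fst x \<in> {0..1})"

definition wgt :: "nat \<Rightarrow> nat \<Rightarrow> real \<Rightarrow> real" where
  "wgt m i p = max (1 - \<bar>real m * p - real i\<bar>) 0"

definition piw :: "(real \<times> bool) measure \<Rightarrow> nat \<Rightarrow> nat \<Rightarrow> real" where
  "piw M m i = (\<integral>x. wgt m i (fst x) \<partial>M)"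

definition qw :: "(real \<times> bool) measure \<Rightarrow> nat \<Rightarrow> nat \<Rightarrow> real" where
  "qw M m i = (if piw M m i = 0 then 0
      else (\<integral>x. wgt m i (fst x) * (if snd x then 1 else 0) \<partial>M) / piw M m i)"

definition SCDL_m :: "(real \<times> bool) measure \<Rightarrow> nat \<Rightarrow> real" where
  "SCDL_m M m = Max ((\<lambda>i.
      (\<Sum>j\<in>{0..i}. piw M m j * max (qw M m j - real (i + 1) / real m) 0)
    + (\<Sum>j\<in>{i+1..m}. piw M m j * max (real i / real m - qw M m j) 0)) ` {0..m})"

definition SCDL :: "(real \<times> bool) measure \<Rightarrow> real" where
  "SCDL M = (INF k\<in>{1::nat..}. max (SCDL_m M (2 ^ k)) (1 / real ((2::nat) ^ k)))"

definition mstar :: "(real \<times> bool) measure \<Rightarrow> enat" where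
  "mstar M = (if \<exists>k::nat. k \<ge> 1 \<and> SCDL_m M (2 * 2 ^ k) \<ge> 1 / real ((2::nat) ^ k)
     then enat (2 ^ (LEAST k::nat. k \<ge> 1 \<and> SCDL_m M (2 * 2 ^ k) \<ge> 1 / real ((2::nat) ^ k)))
     else \<infinity>)"

end

theory Submission imports Defs begin

definition hat :: "nat \<Rightarrow> int \<Rightarrow> real \<Rightarrow> real" where
  "hat n k p = max (1 - \<bar>real n * p - real_of_int k\<bar>) 0"

definition Yv :: "real \<times> bool \<Rightarrow> real" where "Yv x = (if snd x then 1 else 0)"

definition TT :: "(real \<times> bool) measure \<Rightarrow> nat \<Rightarrow> int \<Rightarrow> real \<Rightarrow> real" where
  "TT M n k c = (\<integral>x. hat n k (fst x) * (Yv x - c) \<partial>M)"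

lemma wgt_hat: "wgt m i p = hat m (int i) p"
  by (simp add: wgt_def hat_def)

lemma hat_refine: "hat m j p = hat (2*m) (2*j-1) p / 2 + hat (2*m) (2*j) p + hat (2*m) (2*j+1) p / 2"
proof -
  define x where "x = real m * p - real_of_int j"
  have a: "real (2*m) * p - real_of_int (2*j-1) = 2*x+1" "real (2*m) * p - real_of_int (2*j) = 2*x"
     "real (2*m) * p - real_of_int (2*j+1) = 2*x-1" by (simp_all add: x_def algebra_simps)
  show ?thesis unfolding hat_def a x_def[symmetric] by (auto simp: max_def abs_if)
qed

lemma hat_nonneg: "hat n k p \<ge> 0" by (simp add: hat_def)
lemma hat_le1: "hat n k p \<le> 1" by (simp add: hat_def)

lemma meas_hat: "(\<lambda>x. hat n k (fst x) * (Yv x - c)) \<in> borel_measurable (borel \<Otimes>\<^sub>M count_space UNIV)"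
  unfolding hat_def Yv_def by measurable

lemma pd_prob: "is_pred_dist M \<Longrightarrow> prob_space M" by (simp add: is_pred_dist_def)

lemma pd_meas: assumes "is_pred_dist M" "f \<in> borel_measurable (borel \<Otimes>\<^sub>M count_space UNIV)"
  shows "(f::_\<Rightarrow>real) \<in> borel_measurable M"
proof -
  have "sets M = sets (borel \<Otimes>\<^sub>M count_space UNIV)" using assms(1) by (simp add: is_pred_dist_def)
  then show ?thesis using assms(2) measurable_cong_sets by blast
qed

lemma pd_int: assumes "is_pred_dist M" "f \<in> borel_measurable (borel \<Otimes>\<^sub>M count_space UNIV)"
  "\<And>x. \<bar>f x\<bar> \<le> B"
  shows "integrable M (f::_\<Rightarrow>real)"
proof -
  interpret prob_space M using pd_prob[OF assms(1)] .
  show ?thesis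
  proof (rule integrable_const_bound[where B=B])
    show "AE x in M. norm (f x) \<le> B" using assms(3) by simp
    show "f \<in> borel_measurable M" by (rule pd_meas[OF assms(1,2)])
  qed
qed

lemma int_hatY: assumes "is_pred_dist M"
  shows "integrable M (\<lambda>x. hat n k (fst x) * (Yv x - c))"
proof -
  have "\<bar>hat n k (fst x) * (Yv x - c)\<bar> \<le> 1 + \<bar>c\<bar>" for x
  proof -
    have "\<bar>hat n k (fst x) * (Yv x - c)\<bar> = hat n k (fst x) * \<bar>Yv x - c\<bar>"
      using hat_nonneg by (simp add: abs_mult)
    also have "\<dots> \<le> 1 * \<bar>Yv x - c\<bar>"
      by (rule mult_right_mono) (auto simp: hat_le1)
    also have "\<dots> \<le> 1 + \<bar>c\<bar>" by (auto simp: Yv_def)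
    finally show ?thesis .
  qed
  then show ?thesis by (rule pd_int[OF assms meas_hat])
qed

lemma meas_hat0: "(\<lambda>x. hat n k (fst x)) \<in> borel_measurable (borel \<Otimes>\<^sub>M count_space UNIV)"
  unfolding hat_def by measurable

lemma int_hat: assumes "is_pred_dist M"
  shows "integrable M (\<lambda>x. hat n k (fst x))"
proof -
  have "\<bar>hat n k (fst x)\<bar> \<le> 1" for x using hat_le1[of n k "fst x"] hat_nonneg[of n k "fst x"] by simp
  then show ?thesis by (rule pd_int[OF assms meas_hat0])
qed

lemma int_hatY1: assumes "is_pred_dist M"
  shows "integrable M (\<lambda>x. hat n k (fst x) * Yv x)"
  using int_hatY[OF assms, of n k 0] by simp

lemma TT_eq: assumes "is_pred_dist M"
  shows "TT M n k c = (\<integral>x. hat n k (fst x) * Yv x \<partial>M) - c * (\<integral>x. hat n k (fst x) \<partial>M)"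
proof -
  have "TT M n k c = (\<integral>x. hat n k (fst x) * Yv x - c * hat n k (fst x) \<partial>M)"
    unfolding TT_def by (intro arg_cong[where f="integral\<^sup>L M"] ext) (simp add: algebra_simps)
  also have "\<dots> = (\<integral>x. hat n k (fst x) * Yv x \<partial>M) - (\<integral>x. c * hat n k (fst x) \<partial>M)"
    by (rule Bochner_Integration.integral_diff) (rule int_hatY1[OF assms], rule integrable_mult_right, rule int_hat[OF assms])
  finally show ?thesis by (simp only: integral_mult_right_zero)
qed

lemma AB_bounds: assumes "is_pred_dist M"
  shows "0 \<le> (\<integral>x. hat n k (fst x) * Yv x \<partial>M)"
    "(\<integral>x. hat n k (fst x) * Yv x \<partial>M) \<le> (\<integral>x. hat n k (fst x) \<partial>M)"
proof -
  show "0 \<le> (\<integral>x. hat n k (fst x) * Yv x \<partial>M)"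
    by (rule integral_nonneg_AE, rule AE_I2) (simp add: Yv_def hat_nonneg)
  show "(\<integral>x. hat n k (fst x) * Yv x \<partial>M) \<le> (\<integral>x. hat n k (fst x) \<partial>M)"
  proof (rule integral_mono)
    show "integrable M (\<lambda>x. hat n k (fst x) * Yv x)" by (rule int_hatY1[OF assms])
    show "integrable M (\<lambda>x. hat n k (fst x))" by (rule int_hat[OF assms])
    fix x show "hat n k (fst x) * Yv x \<le> hat n k (fst x)"
      using hat_nonneg[of n k "fst x"] by (simp add: Yv_def)
  qed
qed

lemma key1: assumes "is_pred_dist M"
  shows "piw M m j * max (qw M m j - c) 0 = max (TT M m (int j) c) 0"
proof -
  define A where "A = (\<integral>x. hat m (int j) (fst x) * Yv x \<partial>M)"
  define B where "B = (\<integral>x. hat m (int j) (fst x) \<partial>M)"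
  have p: "piw M m j = B" unfolding piw_def B_def wgt_hat ..
  have q: "qw M m j = (if B = 0 then 0 else A / B)" unfolding qw_def p A_def
    by (simp add: wgt_hat Yv_def)
  have T: "TT M m (int j) c = A - c * B" using TT_eq[OF assms] A_def B_def by simp
  have AB: "0 \<le> A" "A \<le> B" using AB_bounds[OF assms] A_def B_def by auto
  show ?thesis
  proof (cases "B = 0")
    case True then have "A = 0" using AB by simp
    then show ?thesis using True p T by simp
  next
    case False then have "B > 0" using AB by simp
    have e1: "B * (A / B - c) = A - c * B" "B * (c - A / B) = - (A - c * B)"
      using \<open>B > 0\<close> by (simp_all add: field_simps)
    have m: "B * max (A / B - c) 0 = max (B * (A / B - c)) 0"
      using \<open>B > 0\<close> by (simp add: max_mult_distrib_left)
    have q2: "qw M m j = A / B" using q False by simp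
    show ?thesis unfolding p q2 T m e1(1) ..
  qed
qed

lemma key2: assumes "is_pred_dist M"
  shows "piw M m j * max (c - qw M m j) 0 = max (- TT M m (int j) c) 0"
proof -
  define A where "A = (\<integral>x. hat m (int j) (fst x) * Yv x \<partial>M)"
  define B where "B = (\<integral>x. hat m (int j) (fst x) \<partial>M)"
  have p: "piw M m j = B" unfolding piw_def B_def wgt_hat ..
  have q: "qw M m j = (if B = 0 then 0 else A / B)" unfolding qw_def p A_def
    by (simp add: wgt_hat Yv_def)
  have T: "TT M m (int j) c = A - c * B" using TT_eq[OF assms] A_def B_def by simp
  have AB: "0 \<le> A" "A \<le> B" using AB_bounds[OF assms] A_def B_def by auto
  show ?thesis
  proof (cases "B = 0")
    case True then have "A = 0" using AB by simp
    then show ?thesis using True p T by simp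
  next
    case False then have "B > 0" using AB by simp
    have e1: "B * (A / B - c) = A - c * B" "B * (c - A / B) = - (A - c * B)"
      using \<open>B > 0\<close> by (simp_all add: field_simps)
    have m: "B * max (c - A / B) 0 = max (B * (c - A / B)) 0"
      using \<open>B > 0\<close> by (simp add: max_mult_distrib_left)
    have q2: "qw M m j = A / B" using q False by simp
    show ?thesis unfolding p q2 T m e1(2) ..
  qed
qed


lemma TT_refine: assumes "is_pred_dist M"
  shows "TT M m j c = TT M (2*m) (2*j-1) c / 2 + TT M (2*m) (2*j) c + TT M (2*m) (2*j+1) c / 2"
proof -
  let ?f = "\<lambda>k (x::real\<times>bool). hat (2*m) k (fst x) * (Yv x - c)"
  have "TT M m j c = (\<integral>x. ?f (2*j-1) x / 2 + ?f (2*j) x + ?f (2*j+1) x / 2 \<partial>M)"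
    unfolding TT_def
    by (intro arg_cong[where f="integral\<^sup>L M"] ext) (subst hat_refine, simp add: algebra_simps)
  also have "\<dots> = (\<integral>x. ?f (2*j-1) x / 2 + ?f (2*j) x \<partial>M) + (\<integral>x. ?f (2*j+1) x / 2 \<partial>M)"
    by (intro Bochner_Integration.integral_add Bochner_Integration.integrable_add
        integrable_divide int_hatY[OF assms])
  also have "(\<integral>x. ?f (2*j-1) x / 2 + ?f (2*j) x \<partial>M) = (\<integral>x. ?f (2*j-1) x / 2 \<partial>M) + (\<integral>x. ?f (2*j) x \<partial>M)"
    by (intro Bochner_Integration.integral_add integrable_divide int_hatY[OF assms])
  finally show ?thesis unfolding TT_def by simp
qed

lemma TT_edge: assumes "is_pred_dist M"
  shows "TT M n (-1) c = 0" "TT M n (int n + 1) c = 0"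
proof -
  have ae: "AE x in M. fst x \<in> {0..1}" using assms by (simp add: is_pred_dist_def)
  have h1: "hat n (-1) p = 0" if "p \<in> {0..1}" for p
  proof -
    have "real n * p \<ge> 0" using that by simp
    then show ?thesis by (simp add: hat_def)
  qed
  have h2: "hat n (int n + 1) p = 0" if "p \<in> {0..1}" for p
  proof -
    have "real n * p \<le> real n" using that mult_left_le[of p "real n"] by simp
    then show ?thesis by (simp add: hat_def)
  qed
  have "TT M n (-1) c = (\<integral>x. 0 \<partial>M)" unfolding TT_def
    by (rule integral_cong_AE) (use ae h1 in \<open>auto intro: pd_meas[OF assms meas_hat]\<close>)
  then show "TT M n (-1) c = 0" by simp
  have "TT M n (int n + 1) c = (\<integral>x. 0 \<partial>M)" unfolding TT_def
    by (rule integral_cong_AE) (use ae h2 in \<open>auto intro: pd_meas[OF assms meas_hat]\<close>)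
  then show "TT M n (int n + 1) c = 0" by simp
qed

lemma TT_anti: assumes "is_pred_dist M" "c \<le> c'"
  shows "TT M n k c' \<le> TT M n k c"
  unfolding TT_def
proof (rule integral_mono)
  fix x :: "real \<times> bool" show "hat n k (fst x) * (Yv x - c') \<le> hat n k (fst x) * (Yv x - c)"
    using assms(2) hat_nonneg[of n k "fst x"] by (intro mult_left_mono) auto
qed (auto intro: int_hatY[OF assms(1)])

lemma TT_upper: assumes "is_pred_dist M"
  shows "TT M n k c \<le> max (1 - c) 0" "- TT M n k c \<le> max c 0"
proof -
  interpret prob_space M using pd_prob[OF assms] .
  have "TT M n k c \<le> (\<integral>x. max (1 - c) 0 \<partial>M)" unfolding TT_def
  proof (rule integral_mono)
    fix x :: "real \<times> bool"
    have h: "0 \<le> hat n k (fst x)" "hat n k (fst x) \<le> 1" by (rule hat_nonneg, rule hat_le1)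
    show "hat n k (fst x) * (Yv x - c) \<le> max (1 - c) 0"
    proof (cases "Yv x - c \<le> 0")
      case True then show ?thesis using h by (smt (verit) mult_nonneg_nonpos)
    next
      case False
      then have "hat n k (fst x) * (Yv x - c) \<le> 1 * (Yv x - c)" using h by (intro mult_right_mono) auto
      then show ?thesis by (auto simp: Yv_def)
    qed
  qed (auto intro: int_hatY[OF assms])
  then show "TT M n k c \<le> max (1 - c) 0" by (simp add: prob_space)
  have "(\<integral>x. hat n k (fst x) * (c - Yv x) \<partial>M) \<le> (\<integral>x. max c 0 \<partial>M)"
  proof (rule integral_mono)
    fix x :: "real \<times> bool"
    have h: "0 \<le> hat n k (fst x)" "hat n k (fst x) \<le> 1" by (rule hat_nonneg, rule hat_le1)
    show "hat n k (fst x) * (c - Yv x) \<le> max c 0"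
    proof (cases "c - Yv x \<le> 0")
      case True then show ?thesis using h by (smt (verit) mult_nonneg_nonpos)
    next
      case False
      then have "hat n k (fst x) * (c - Yv x) \<le> 1 * (c - Yv x)" using h by (intro mult_right_mono) auto
      then show ?thesis by (auto simp: Yv_def)
    qed
  next
    show "integrable M (\<lambda>x. hat n k (fst x) * (c - Yv x))"
      using integrable_minus[OF int_hatY[OF assms, of n k c]] by (simp add: algebra_simps)
  qed auto
  moreover have "(\<integral>x. hat n k (fst x) * (c - Yv x) \<partial>M) = (\<integral>x. - (hat n k (fst x) * (Yv x - c)) \<partial>M)"
    by (intro arg_cong[where f="integral\<^sup>L M"] ext) (simp add: algebra_simps)
  then have "(\<integral>x. hat n k (fst x) * (c - Yv x) \<partial>M) = - TT M n k c"
    unfolding TT_def by simp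
  ultimately show "- TT M n k c \<le> max c 0" by (simp add: prob_space)
qed


lemma pos_sub: "max ((x::real)/2 + y + z/2) 0 \<le> max x 0 / 2 + max y 0 + max z 0 / 2"
  by (simp add: max_def)

lemma sum_ref1:
  fixes a :: "int \<Rightarrow> real"
  shows "(\<Sum>j\<in>{0..i::nat}. max (a (2*int j - 1)/2 + a (2*int j) + a (2*int j + 1)/2) 0)
    \<le> max (a (-1)) 0 / 2 + (\<Sum>k\<in>{0..2*i}. max (a (int k)) 0) + max (a (2*int i + 1)) 0 / 2"
proof (induction i)
  case 0
  show ?case using pos_sub[of "a (-1)" "a 0" "a 1"] by simp
next
  case (Suc i)
  have e: "2 * Suc i = Suc (Suc (2*i))" by simp
  have t1: "a (2*int (Suc i) - 1) = a (2*int i + 1)" by (simp add: algebra_simps)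
  have t2: "a (2*int (Suc i)) = a (int (Suc (Suc (2*i))))" by (simp add: algebra_simps)
  have t4: "a (int (Suc (2*i))) = a (2*int i + 1)" by (simp add: algebra_simps)
  have p: "max (a (2*int i + 1)/2 + a (int (Suc (Suc (2*i)))) + a (2*int (Suc i) + 1)/2) 0
     \<le> max (a (2*int i + 1)) 0 / 2 + max (a (int (Suc (Suc (2*i))))) 0 + max (a (2*int (Suc i) + 1)) 0 / 2"
    by (rule pos_sub)
  show ?case unfolding e sum.atLeast0_atMost_Suc t1 t2 t4 using Suc.IH p by linarith
qed

lemma sum_ref2:
  fixes b :: "int \<Rightarrow> real"
  assumes "i \<le> n"
  shows "(\<Sum>j\<in>{i+1..n}. max (b (2*int j - 1)/2 + b (2*int j) + b (2*int j + 1)/2) 0)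
    \<le> (\<Sum>k\<in>{2*i+1..2*n}. max (b (int k)) 0) - max (b (2*int i + 1)) 0 / 2 + max (b (2*int n + 1)) 0 / 2"
  using assms
proof (induction n rule: dec_induct)
  case base
  show ?case by simp
next
  case (step n)
  have e: "2 * Suc n = Suc (Suc (2*n))" by simp
  have t1: "b (2*int (Suc n) - 1) = b (2*int n + 1)" by (simp add: algebra_simps)
  have t2: "b (2*int (Suc n)) = b (int (Suc (Suc (2*n))))" by (simp add: algebra_simps)
  have t4: "b (int (Suc (2*n))) = b (2*int n + 1)" by (simp add: algebra_simps)
  have p: "max (b (2*int n + 1)/2 + b (int (Suc (Suc (2*n)))) + b (2*int (Suc n) + 1)/2) 0
     \<le> max (b (2*int n + 1)) 0 / 2 + max (b (int (Suc (Suc (2*n))))) 0 + max (b (2*int (Suc n) + 1)) 0 / 2"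
    by (rule pos_sub)
  have s1: "(\<Sum>j\<in>{i+1..Suc n}. max (b (2*int j - 1)/2 + b (2*int j) + b (2*int j + 1)/2) 0)
     = (\<Sum>j\<in>{i+1..n}. max (b (2*int j - 1)/2 + b (2*int j) + b (2*int j + 1)/2) 0)
       + max (b (2*int (Suc n) - 1)/2 + b (2*int (Suc n)) + b (2*int (Suc n) + 1)/2) 0"
    using step.hyps by (subst sum.cl_ivl_Suc) simp
  have s2: "(\<Sum>k\<in>{2*i+1..2*Suc n}. max (b (int k)) 0) = (\<Sum>k\<in>{2*i+1..2*n}. max (b (int k)) 0)
     + max (b (int (Suc (2*n)))) 0 + max (b (int (Suc (Suc (2*n))))) 0"
    using step.hyps unfolding e by (simp add: sum.cl_ivl_Suc)
  show ?case unfolding s1 s2 t1 t2 t4 using step.IH p by linarith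
qed


definition FF :: "(real \<times> bool) measure \<Rightarrow> nat \<Rightarrow> nat \<Rightarrow> real" where
  "FF M m i = (\<Sum>j\<in>{0..i}. max (TT M m (int j) (real (i + 1) / real m)) 0)
            + (\<Sum>j\<in>{i+1..m}. max (- TT M m (int j) (real i / real m)) 0)"

lemma FF_nonneg: "FF M m i \<ge> 0"
  unfolding FF_def by (intro add_nonneg_nonneg sum_nonneg) auto

lemma SCDL_m_FF: assumes "is_pred_dist M"
  shows "SCDL_m M m = Max (FF M m ` {0..m})"
  unfolding SCDL_m_def FF_def key1[OF assms] key2[OF assms] ..

lemma FF_le_SCDL: "i \<le> m \<Longrightarrow> is_pred_dist M \<Longrightarrow> FF M m i \<le> SCDL_m M m"
  by (simp add: SCDL_m_FF)

lemma SCDL_m_nonneg: "is_pred_dist M \<Longrightarrow> SCDL_m M m \<ge> 0"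
  using FF_le_SCDL[of 0 m M] FF_nonneg[of M m 0] by linarith

lemma FF_mono: assumes pd: "is_pred_dist M" and m: "m \<ge> 1" and i: "i < m"
  shows "2 * FF M m i \<le> FF M (2*m) (2*i) + FF M (2*m) (2*i+1)"
proof -
  define c1 where "c1 = real (i + 1) / real m"
  define c0 where "c0 = real i / real m"
  define a where "a = (\<lambda>k. TT M (2*m) k c1)"
  define b where "b = (\<lambda>k. - TT M (2*m) k c0)"
  define Sa where "Sa = (\<Sum>k\<in>{0..2*i}. max (a (int k)) 0)"
  define Sb where "Sb = (\<Sum>k\<in>{2*i+2..2*m}. max (b (int k)) 0)"
  have ra: "TT M m (int j) c1 = a (2*int j - 1)/2 + a (2*int j) + a (2*int j + 1)/2" for j
    unfolding a_def by (rule TT_refine[OF pd])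
  have rb: "- TT M m (int j) c0 = b (2*int j - 1)/2 + b (2*int j) + b (2*int j + 1)/2" for j
    unfolding b_def using TT_refine[OF pd, of m "int j" c0] by simp
  have a0: "a (-1) = 0" unfolding a_def by (rule TT_edge(1)[OF pd])
  have b0: "b (2*int m + 1) = 0" unfolding b_def using TT_edge(2)[OF pd, of "2*m" c0] by simp
  have sbs: "(\<Sum>k\<in>{2*i+1..2*m}. max (b (int k)) 0) = max (b (2*int i+1)) 0 + Sb"
  proof -
    have "{2*i+1..2*m} = insert (2*i+1) {2*i+2..2*m}" using i by auto
    then show ?thesis unfolding Sb_def by (simp add: add.commute)
  qed
  have "FF M m i = (\<Sum>j\<in>{0..i}. max (a (2*int j - 1)/2 + a (2*int j) + a (2*int j + 1)/2) 0)
      + (\<Sum>j\<in>{i+1..m}. max (b (2*int j - 1)/2 + b (2*int j) + b (2*int j + 1)/2) 0)"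
    unfolding FF_def c1_def[symmetric] c0_def[symmetric] ra rb ..
  also have "\<dots> \<le> (max (a (-1)) 0 / 2 + Sa + max (a (2*int i + 1)) 0 / 2)
      + ((\<Sum>k\<in>{2*i+1..2*m}. max (b (int k)) 0) - max (b (2*int i + 1)) 0 / 2 + max (b (2*int m + 1)) 0 / 2)"
    unfolding Sa_def using i by (intro add_mono sum_ref1 sum_ref2) auto
  also have "\<dots> = Sa + max (a (2*int i + 1)) 0 / 2 + max (b (2*int i + 1)) 0 / 2 + Sb"
    using a0 b0 sbs by simp
  finally have F1: "FF M m i \<le> Sa + max (a (2*int i + 1)) 0 / 2 + max (b (2*int i + 1)) 0 / 2 + Sb" .
  have m0: "real m > 0" using m by simp
  have c1e: "real (2*i+1+1) / real (2*m) = c1" unfolding c1_def using m0 by (simp add: field_simps)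
  have c0e: "real (2*i) / real (2*m) = c0" unfolding c0_def using m0 by (simp add: field_simps)
  have cm1: "real (2*i+1) / real (2*m) \<le> c1" unfolding c1_def using m0 by (simp add: field_simps)
  have cm0: "c0 \<le> real (2*i+1) / real (2*m)" unfolding c0_def using m0 by (simp add: field_simps)
  have G1: "FF M (2*m) (2*i+1) \<ge> Sa + max (a (2*int i + 1)) 0 + Sb"
  proof -
    have se: "{2*i+1+1..2*m} = {2*i+2..2*m}" by simp
    have "FF M (2*m) (2*i+1) = (\<Sum>k\<in>{0..2*i}. max (a (int k)) 0) + max (a (int (2*i+1))) 0
        + (\<Sum>k\<in>{2*i+1+1..2*m}. max (- TT M (2*m) (int k) (real (2*i+1) / real (2*m))) 0)"
      unfolding FF_def c1e a_def by simp
    moreover have "(\<Sum>k\<in>{2*i+1+1..2*m}. max (- TT M (2*m) (int k) (real (2*i+1) / real (2*m))) 0) \<ge> Sb"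
      unfolding Sb_def b_def se
      by (intro sum_mono max.mono) (use TT_anti[OF pd cm0] in auto)
    ultimately show ?thesis unfolding Sa_def by (simp add: add.commute)
  qed
  have G0: "FF M (2*m) (2*i) \<ge> Sa + max (b (2*int i + 1)) 0 + Sb"
  proof -
    have "FF M (2*m) (2*i) = (\<Sum>k\<in>{0..2*i}. max (TT M (2*m) (int k) (real (2*i+1) / real (2*m))) 0)
        + (\<Sum>k\<in>{2*i+1..2*m}. max (b (int k)) 0)"
      unfolding FF_def c0e b_def by simp
    moreover have "(\<Sum>k\<in>{0..2*i}. max (TT M (2*m) (int k) (real (2*i+1) / real (2*m))) 0) \<ge> Sa"
      unfolding Sa_def a_def
      by (intro sum_mono max.mono) (use TT_anti[OF pd cm1] in auto)
    ultimately show ?thesis using sbs by simp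
  qed
  show ?thesis using F1 G1 G0 by linarith
qed

lemma SCDL_mono: assumes pd: "is_pred_dist M" and m: "m \<ge> 1"
  shows "SCDL_m M m \<le> SCDL_m M (2*m)"
proof -
  have "FF M m i \<le> SCDL_m M (2*m)" if "i \<in> {0..m}" for i
  proof (cases "i < m")
    case True
    have "FF M (2*m) (2*i) \<le> SCDL_m M (2*m)" "FF M (2*m) (2*i+1) \<le> SCDL_m M (2*m)"
      using True by (auto intro!: FF_le_SCDL[OF _ pd])
    then show ?thesis using FF_mono[OF pd m True] by linarith
  next
    case False
    then have im: "i = m" using that by auto
    have "FF M m m \<le> 0"
    proof -
      have c: "1 \<le> real (m + 1) / real m" using m by (simp add: field_simps)
      have "max (TT M m (int j) (real (m + 1) / real m)) 0 = 0" for j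
        using TT_upper(1)[OF pd, of m "int j" "real (m + 1) / real m"] c by simp
      then show ?thesis unfolding FF_def by simp
    qed
    then show ?thesis unfolding im using SCDL_m_nonneg[OF pd, of "2*m"] by linarith
  qed
  then show ?thesis unfolding SCDL_m_FF[OF pd, of m] by (subst Max_le_iff) auto
qed


lemma a_mono: assumes pd: "is_pred_dist M" and "k \<le> k'"
  shows "SCDL_m M (2^k) \<le> SCDL_m M (2^k')"
  using assms(2)
proof (induction k' rule: dec_induct)
  case (step n)
  have "SCDL_m M (2^n) \<le> SCDL_m M (2*2^n)" by (rule SCDL_mono[OF pd]) simp
  then show ?case using step.IH by simp
qed simp

lemma SCDL_2: assumes pd: "is_pred_dist M" shows "SCDL_m M 2 \<le> 1/2"
proof -
  have "FF M 2 i \<le> 1/2" if "i \<in> {0..2}" for i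
  proof -
    have "i = 0 \<or> i = 1 \<or> i = 2" using that by auto
    moreover have "FF M 2 0 \<le> 1/2"
    proof -
      have e: "{0..0::nat} = {0}" "{0+1..2::nat} = {1,2}" by auto
      have "max (TT M 2 0 (1/2)) 0 \<le> 1/2" using TT_upper(1)[OF pd, of 2 0 "1/2"] by simp
      moreover have "max (- TT M 2 1 0) 0 = 0" "max (- TT M 2 2 0) 0 = 0"
        using TT_upper(2)[OF pd, of 2 1 0] TT_upper(2)[OF pd, of 2 2 0] by simp_all
      ultimately show ?thesis unfolding FF_def e by simp
    qed
    moreover have "FF M 2 1 \<le> 1/2"
    proof -
      have e: "{0..1::nat} = {0,1}" "{1+1..2::nat} = {2}" by auto
      have "max (- TT M 2 2 (1/2)) 0 \<le> 1/2" using TT_upper(2)[OF pd, of 2 2 "1/2"] by simp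
      moreover have "max (TT M 2 0 1) 0 = 0" "max (TT M 2 1 1) 0 = 0"
        using TT_upper(1)[OF pd, of 2 0 1] TT_upper(1)[OF pd, of 2 1 1] by simp_all
      ultimately show ?thesis unfolding FF_def e by simp
    qed
    moreover have "FF M 2 2 \<le> 1/2"
    proof -
      have e: "{0..2::nat} = {0,1,2}" "{2+1..2::nat} = {}" by auto
      have "max (TT M 2 0 (3/2)) 0 = 0" "max (TT M 2 1 (3/2)) 0 = 0" "max (TT M 2 2 (3/2)) 0 = 0"
        using TT_upper(1)[OF pd, of 2 0 "3/2"] TT_upper(1)[OF pd, of 2 1 "3/2"]
          TT_upper(1)[OF pd, of 2 2 "3/2"] by simp_all
      then show ?thesis unfolding FF_def e by simp
    qed
    ultimately show ?thesis by auto
  qed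
  then show ?thesis unfolding SCDL_m_FF[OF pd] by (subst Max_le_iff) auto
qed


theorem lemma3p5:
  fixes M :: "(real \<times> bool) measure"
  assumes "is_pred_dist M"
  shows "(mstar M = \<infinity> \<longrightarrow> SCDL M = 0) \<and>
         (\<forall>m::nat. mstar M = enat m \<longrightarrow>
            SCDL M = max (SCDL_m M m) (1 / real m) \<and>
            1 / real m \<le> SCDL M \<and> SCDL M < 2 / real m \<and>
            SCDL_m M (2 * m) \<ge> SCDL M)"
proof -
  note pd = assms
  define a where "a = (\<lambda>k::nat. SCDL_m M (2^k))"
  define bb where "bb = (\<lambda>k::nat. max (a k) (1 / (2::real)^k))"
  have SC: "SCDL M = (INF k\<in>{1::nat..}. bb k)"
    unfolding SCDL_def bb_def a_def by simp
  have a_nn: "a k \<ge> 0" for k unfolding a_def by (rule SCDL_m_nonneg[OF pd])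
  have amono: "k \<le> k' \<Longrightarrow> a k \<le> a k'" for k k' unfolding a_def by (rule a_mono[OF pd])
  have a2: "a (Suc k) = SCDL_m M (2 * 2^k)" for k unfolding a_def by simp
  have bb_nn: "bb k \<ge> 0" for k unfolding bb_def by (simp add: max.coboundedI2)
  have bdd: "bdd_below (bb ` {1..})" by (rule bdd_belowI[of _ 0]) (auto intro: bb_nn)
  define P where "P = (\<lambda>k::nat. k \<ge> 1 \<and> SCDL_m M (2 * 2 ^ k) \<ge> 1 / real ((2::nat) ^ k))"
  have mstar_eq: "mstar M = (if \<exists>k. P k then enat (2 ^ (LEAST k. P k)) else \<infinity>)"
    unfolding mstar_def P_def ..
  have part1: "mstar M = \<infinity> \<longrightarrow> SCDL M = 0"
  proof
    assume "mstar M = \<infinity>"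
    then have nP: "\<not> P k" for k unfolding mstar_eq by (auto split: if_splits)
    have lt: "a (Suc k) < 1 / 2^k" if "k \<ge> 1" for k using nP[of k] that unfolding P_def a2 by auto
    have ge: "SCDL M \<ge> 0" unfolding SC by (rule cINF_greatest) (auto intro: bb_nn)
    have le: "SCDL M \<le> 1 / 2^k" if "k \<ge> 1" for k
    proof -
      have "SCDL M \<le> bb (Suc k)" unfolding SC by (rule cINF_lower[OF bdd]) simp
      also have "\<dots> \<le> 1 / 2^k" unfolding bb_def using lt[OF that]
        by (simp add: field_simps)
      finally show ?thesis .
    qed
    show "SCDL M = 0"
    proof (rule ccontr)
      assume "SCDL M \<noteq> 0"
      then have pos: "SCDL M > 0" using ge by simp
      obtain n where n: "1 / SCDL M < 2^n" using real_arch_pow[of 2 "1 / SCDL M"] by auto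
      have "(2::real)^n \<le> 2 * 2^n" by simp
      then have "1 / SCDL M < 2^(Suc n)" using n unfolding power_Suc by linarith
      then have "1 / 2^(Suc n) < SCDL M" using pos by (simp add: field_simps)
      with le[of "Suc n"] show False by simp
    qed
  qed
  have part2: "SCDL M = max (SCDL_m M m) (1 / real m) \<and>
            1 / real m \<le> SCDL M \<and> SCDL M < 2 / real m \<and>
            SCDL_m M (2 * m) \<ge> SCDL M" if ms: "mstar M = enat m" for m
  proof -
    have ex: "\<exists>k. P k" using ms unfolding mstar_eq by (auto split: if_splits)
    define K where "K = (LEAST k. P k)"
    have mK: "m = 2^K" using ms ex unfolding mstar_eq K_def by simp
    have PK: "P K" unfolding K_def using ex by (metis LeastI)
    have K1: "K \<ge> 1" using PK unfolding P_def by simp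
    have aK1: "a (Suc K) \<ge> 1 / 2^K" using PK unfolding P_def a2 by simp
    have small: "a (Suc k) < 1 / 2^k" if "k \<ge> 1" "k < K" for k
    proof -
      have "\<not> P k" using that(2) unfolding K_def by (rule not_less_Least)
      then show ?thesis using that(1) unfolding P_def a2 by auto
    qed
    have aK: "a K < 2 / 2^K"
    proof (cases "K = 1")
      case True
      then show ?thesis using SCDL_2[OF pd] unfolding a_def by simp
    next
      case False
      then obtain k where k: "K = Suc k" "k \<ge> 1" using K1 by (cases K) auto
      have "a K < 1 / 2^k" using small[of k] k by simp
      also have "\<dots> = 2 / 2^K" using k by simp
      finally show ?thesis .
    qed
    have low: "bb K \<le> bb k" if "k \<ge> 1" for k
    proof (cases "K < k")
      case True
      have "a (Suc K) \<le> a k" using True by (intro amono) simp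
      moreover have "a K \<le> a (Suc K)" by (intro amono) simp
      ultimately show ?thesis using aK1 unfolding bb_def by (simp add: max.coboundedI1)
    next
      case False
      show ?thesis
      proof (cases "k = K")
        case True then show ?thesis by simp
      next
        case False2: False
        then have kK: "k < K" using False by simp
        then have "(2::real)^k \<le> 2^K / 2"
        proof -
          have "(2::real)^(Suc k) \<le> 2^K" using kK by (intro power_increasing) auto
          then show ?thesis by simp
        qed
        then have "2 / 2^K \<le> 1 / (2::real)^k" by (simp add: field_simps)
        moreover have "1 / (2::real)^K \<le> 1 / 2^k" using kK
          by (intro divide_left_mono power_increasing) auto
        ultimately have "max (a K) (1 / 2^K) \<le> 1 / (2::real)^k" using aK by simp
        then show ?thesis unfolding bb_def using max.coboundedI2 order_trans by blast
      qed
    qed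
    have SCe: "SCDL M = bb K"
    proof (rule antisym)
      show "SCDL M \<le> bb K" unfolding SC by (rule cINF_lower[OF bdd]) (use K1 in simp)
      show "bb K \<le> SCDL M" unfolding SC by (rule cINF_greatest) (use low in auto)
    qed
    have rm: "real m = 2^K" using mK by simp
    have "SCDL_m M (2 * m) = a (Suc K)" unfolding a2 mK ..
    moreover have "a K \<le> a (Suc K)" by (intro amono) simp
    moreover have "1 / (2::real)^K < 2 / 2^K" by (simp add: divide_strict_right_mono)
    ultimately show ?thesis unfolding SCe bb_def rm using aK aK1
      by (auto simp: a_def mK)
  qed
  show ?thesis using part1 part2 by blast
qed

end
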